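(* Let $X$ be a convex subset of $\mathbb{R}^n$ and $f=(f_1,\ldots,f_m):X\to\mathbb{R}^m$ a convex mapping. Then the following are equivalent: $(\alpha)$ $\mathrm{WE}(f,X)=\mathrm{E}(f,X)$; $(\beta)$ $\displaystyle\bigcup_{\emptyset\neq I\subseteq M}\mathrm{E}(f_I,X)\subseteq\mathrm{E}(f,X)$, where $M=\{1,\ldots,m\}$.
   Context: A mapping $f=(f_1,\ldots,f_m)$ on a convex set is convex if each $f_i$ is a convex function. Let $M=\{1,\ldots,m\}$. For a nonempty $I\subseteq M$ and $y,y'\in\mathbb{R}^m$: $y\lneq_I y'$ means $y_i\leq y'_i$ for all $i\in I$ and $y_j<y'_j$ for some $j\in I$; $y<_I y'$ means $y_i<y'_i$ for all $i\in I$. For $Y\subseteq\mathbb{R}^m$, $\mathrm{M}_I Y$ (resp. $\mathrm{WM}_I Y$) is the set of all $y'\in Y$ for which there is no $y\in Y$ with $y\lneq_I y'$ (resp. $y<_I y'$). For $I=\{i_1<\cdots<i_k\}$, $f_I=(f_{i_1},\ldots,f_{i_k})$, $\mathrm{E}(f_I,X)=f^{-1}(\mathrm{M}_I f(X))$, $\mathrm{WE}(f_I,X)=f^{-1}(\mathrm{WM}_I f(X))$; $\mathrm{E}(f,X)=\mathrm{E}(f_M,X)$, $\mathrm{WE}(f,X)=\mathrm{WE}(f_M,X)$. *)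

theory Defs
  imports "HOL-Analysis.Analysis"
begin

text \<open>Objective space R^m is modelled as real^'m for a finite index type 'm,
  so M = {1..m} corresponds to UNIV :: 'm set.\<close>

definition lesseq_neq_on :: "'m set \<Rightarrow> real^'m \<Rightarrow> real^'m \<Rightarrow> bool" where
  "lesseq_neq_on I y y' \<longleftrightarrow> (\<forall>i\<in>I. y$i \<le> y'$i) \<and> (\<exists>j\<in>I. y$j < y'$j)"

definition less_on :: "'m set \<Rightarrow> real^'m \<Rightarrow> real^'m \<Rightarrow> bool" where
  "less_on I y y' \<longleftrightarrow> (\<forall>i\<in>I. y$i < y'$i)"

definition Min_on :: "'m set \<Rightarrow> (real^'m) set \<Rightarrow> (real^'m) set" where
  "Min_on I Y = {y'\<in>Y. \<not> (\<exists>y\<in>Y. lesseq_neq_on I y y')}"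

definition WMin_on :: "'m set \<Rightarrow> (real^'m) set \<Rightarrow> (real^'m) set" where
  "WMin_on I Y = {y'\<in>Y. \<not> (\<exists>y\<in>Y. less_on I y y')}"

definition Eff :: "'m set \<Rightarrow> ('a \<Rightarrow> real^'m) \<Rightarrow> 'a set \<Rightarrow> 'a set" where
  "Eff I f X = {x\<in>X. f x \<in> Min_on I (f ` X)}"

definition WEff :: "'m set \<Rightarrow> ('a \<Rightarrow> real^'m) \<Rightarrow> 'a set \<Rightarrow> 'a set" where
  "WEff I f X = {x\<in>X. f x \<in> WMin_on I (f ` X)}"

end

theory Submission
  imports Defs
begin

lemma Eff_sub_WEff_UNIV:
  assumes "I \<noteq> {}"
  shows "Eff I f X \<subseteq> WEff UNIV f X"
proof
  fix x assume "x \<in> Eff I f X"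
  then have xX: "x \<in> X" and h: "\<And>y. y \<in> X \<Longrightarrow> \<not> lesseq_neq_on I (f y) (f x)"
    unfolding Eff_def Min_on_def by auto
  have "\<not> less_on UNIV (f y) (f x)" if "y \<in> X" for y
  proof
    assume a: "less_on UNIV (f y) (f x)"
    obtain j where "j \<in> I" using assms by auto
    then have "lesseq_neq_on I (f y) (f x)" using a unfolding less_on_def lesseq_neq_on_def
      by (auto intro: less_imp_le)
    with h that show False by blast
  qed
  then show "x \<in> WEff UNIV f X" using xX unfolding WEff_def WMin_on_def by auto
qed

lemma Eff_UNIV_sub: "Eff UNIV f X \<subseteq> WEff UNIV f X"
  by (rule Eff_sub_WEff_UNIV) simp

lemma WE_to_E:
  fixes X :: "(real^'n) set" and f :: "real^'n \<Rightarrow> real^'m"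
  assumes cX: "convex X"
    and cf: "\<And>i. convex_on X (\<lambda>x. f x $ i)"
  shows "\<And>I. card I = k \<Longrightarrow> I \<noteq> {} \<Longrightarrow> x \<in> WEff I f X \<Longrightarrow> \<exists>J. J \<noteq> {} \<and> x \<in> Eff J f X"
proof (induction k rule: less_induct)
  case (less k I)
  have xX: "x \<in> X" and nw: "\<And>y. y \<in> X \<Longrightarrow> \<not> less_on I (f y) (f x)"
    using less.prems(3) unfolding WEff_def WMin_on_def by auto
  show ?case
  proof (cases "x \<in> Eff I f X")
    case True then show ?thesis using less.prems(2) by blast
  next
    case False
    then obtain y j where yX: "y \<in> X" and yle: "\<And>i. i \<in> I \<Longrightarrow> f y $ i \<le> f x $ i"
      and jI: "j \<in> I" and yj: "f y $ j < f x $ j"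
      using xX unfolding Eff_def Min_on_def lesseq_neq_on_def by auto
    define I' where "I' = I - {j}"
    have I'ne: "I' \<noteq> {}"
    proof
      assume "I' = {}"
      then have "I = {j}" using jI unfolding I'_def by auto
      then have "less_on I (f y) (f x)" using yj unfolding less_on_def by auto
      with nw yX show False by blast
    qed
    have cardI': "card I' < card I"
      unfolding I'_def by (rule card_Diff1_less) (simp_all add: jI)
    show ?thesis
    proof (cases "x \<in> WEff I' f X")
      case True
      from less.IH[OF _ refl I'ne True] cardI' less.prems(1) show ?thesis by blast
    next
      case False
      then obtain z where zX: "z \<in> X" and zlt: "\<And>i. i \<in> I' \<Longrightarrow> f z $ i < f x $ i"
        using xX unfolding WEff_def WMin_on_def less_on_def by auto
      define d where "d = f x $ j - f y $ j"
      define c where "c = f z $ j - f y $ j"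
      define t where "t = d / (2 * (\<bar>c\<bar> + d))"
      have d0: "d > 0" using yj d_def by simp
      have t0: "t > 0" unfolding t_def using d0 by simp
      have t1: "t \<le> 1/2" unfolding t_def using d0 by (simp add: divide_simps)
      have tc: "t * c < d"
      proof -
        have "t * c \<le> t * \<bar>c\<bar>" using t0 by (simp add: mult_left_mono)
        also have "t * \<bar>c\<bar> \<le> d / 2"
          unfolding t_def using d0 by (simp add: divide_simps)
        finally show ?thesis using d0 by simp
      qed
      define w where "w = (1 - t) *\<^sub>R y + t *\<^sub>R z"
      have wX: "w \<in> X" unfolding w_def using convexD[OF cX yX zX, of "1 - t" t] t0 t1 by simp
      have cv: "\<And>i. f w $ i \<le> (1 - t) * f y $ i + t * f z $ i"
        unfolding w_def using convex_onD[OF cf, of t y z] t0 t1 yX zX by simp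
      have "less_on I (f w) (f x)"
        unfolding less_on_def
      proof
        fix i assume iI: "i \<in> I"
        show "f w $ i < f x $ i"
        proof (cases "i = j")
          case True
          have "(1 - t) * f y $ j + t * f z $ j = f y $ j + t * c" unfolding c_def by (simp add: algebra_simps)
          then show ?thesis using cv[of j] tc True d_def by simp
        next
          case False
          then have "i \<in> I'" using iI I'_def by auto
          then have a: "f z $ i < f x $ i" and b: "f y $ i \<le> f x $ i" using zlt yle iI by auto
          have "(1 - t) * f y $ i \<le> (1 - t) * f x $ i" using b t1 by (simp add: mult_left_mono)
          moreover have "t * f z $ i < t * f x $ i" using a t0 by simp
          ultimately show ?thesis using cv[of i] by (simp add: algebra_simps)
        qed
      qed
      with nw[OF wX] have False by (rule notE)
      then show ?thesis ..
    qed
  qed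
qed

theorem corollary6p2:
  fixes X :: "(real^'n) set" and f :: "real^'n \<Rightarrow> real^'m"
  assumes "convex X"
    and "\<And>i. convex_on X (\<lambda>x. f x $ i)"
  shows "WEff UNIV f X = Eff UNIV f X \<longleftrightarrow>
         (\<Union>I\<in>{I. I \<noteq> {}}. Eff I f X) \<subseteq> Eff UNIV f X"
proof
  assume "WEff UNIV f X = Eff UNIV f X"
  show "(\<Union>I\<in>{I. I \<noteq> {}}. Eff I f X) \<subseteq> Eff UNIV f X"
  proof
    fix x assume "x \<in> (\<Union>I\<in>{I. I \<noteq> {}}. Eff I f X)"
    then obtain I where "I \<noteq> {}" "x \<in> Eff I f X" by auto
    then have "x \<in> WEff UNIV f X" using Eff_sub_WEff_UNIV[of I f X] by auto
    then show "x \<in> Eff UNIV f X" using \<open>WEff UNIV f X = Eff UNIV f X\<close> by simp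
  qed
next
  assume h: "(\<Union>I\<in>{I. I \<noteq> {}}. Eff I f X) \<subseteq> Eff UNIV f X"
  have "WEff UNIV f X \<subseteq> Eff UNIV f X"
  proof
    fix x assume "x \<in> WEff UNIV f X"
    then obtain J where "J \<noteq> {}" "x \<in> Eff J f X"
      using WE_to_E[OF assms refl, of UNIV x] by blast
    then show "x \<in> Eff UNIV f X" using h by blast
  qed
  then show "WEff UNIV f X = Eff UNIV f X" using Eff_UNIV_sub[of f X] by (rule subset_antisym)
qed

end
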